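(* Let $(T,f,(\le_h))$ and $(T',f',(\le'_h))$ be ordered merge trees and $\delta\ge0$. If there exists a monotone $\delta$-interleaving between them, then there exists a monotone $\delta$-good map $T\to T'$.
   Context: A merge tree $(T,f)$: a finite rooted tree $T$ identified with its topological realisation, with a continuous $f\colon T\to\mathbb{R}\cup\{\infty\}$ strictly increasing towards the root, $f(v)=\infty$ iff $v$ is the root; lowest leaf at height $0$. $x_1\preceq x_2$ ($x_2$ ancestor of $x_1$) iff there is an $f$-increasing path from $x_1$ to $x_2$; $\mathrm{anc}_h(x)$ is the unique ancestor of $x$ at height $h\ge f(x)$; $x^\delta:=\mathrm{anc}_{f(x)+\delta}(x)$; $\mathbb{L}_h=\{x:f(x)=h\}$. A layer-order is a family $(\le_h)_{h\ge0}$ of total orders on the $\mathbb{L}_h$ that is consistent ($h_1\le h_2$, $x_1\le_{h_1}x_2$ imply $\mathrm{anc}_{h_2}(x_1)\le_{h_2}\mathrm{anc}_{h_2}(x_2)$); $(T,f,(\le_h))$ is an ordered merge tree. A map $\alpha\colon T\to T'$ with $f'(\alpha(x))=f(x)+\delta$ for all $x$ is monotone if for all $h$ and $x_1,x_2\in\mathbb{L}_h$, $x_1\le_h x_2$ implies $\alpha(x_1)\le'_{h+\delta}\alpha(x_2)$. A $\delta$-interleaving is a pair of continuous maps $\alpha\colon T\to T'$, $\beta\colon T'\to T$ with $f'(\alpha(x))=f(x)+\delta$, $\beta(\alpha(x))=x^{2\delta}$, $f(\beta(y))=f'(y)+\delta$, $\alpha(\beta(y))=y^{2\delta}$ for all $x\in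 T,y\in T'$; it is monotone if $\alpha$ and $\beta$ are. A $\delta$-good map is a continuous map $\alpha\colon T\to T'$ with (G1) $f'(\alpha(x))=f(x)+\delta$ for all $x$; (G2) if $\alpha(x_1)\succeq\alpha(x_2)$ then $x_1^{2\delta}\succeq x_2^{2\delta}$; (G3) $|f'(y^F)-f'(y)|\le2\delta$ for all $y\in T'\setminus\mathrm{Im}(\alpha)$, where $y^F$ is the lowest ancestor of $y$ in $\mathrm{Im}(\alpha)$. A monotone $\delta$-good map is a $\delta$-good map that is monotone. *)

theory Defs
  imports "HOL-Analysis.Analysis" "HOL-Library.Extended_Real"
begin

record 'v mtree =
  verts :: "'v set"
  par   :: "'v \<Rightarrow> 'v"
  rt    :: "'v"
  hv    :: "'v \<Rightarrow> ereal"

definition merge_tree :: "'v mtree \<Rightarrow> bool" where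
  "merge_tree M \<longleftrightarrow>
     finite (verts M) \<and> rt M \<in> verts M \<and> hv M (rt M) = \<infinity> \<and>
     (\<forall>v\<in>verts M - {rt M}. par M v \<in> verts M \<and> hv M v < hv M (par M v)
          \<and> (\<exists>h::real. hv M v = ereal h) \<and> (\<exists>n. (par M ^^ n) v = rt M)) \<and>
     (\<exists>v\<in>verts M. hv M v = 0) \<and> (\<forall>v\<in>verts M. 0 \<le> hv M v)"

inductive vanc :: "'v mtree \<Rightarrow> 'v \<Rightarrow> 'v \<Rightarrow> bool" for M where
  vanc_refl: "vanc M v v"
| vanc_step: "v \<noteq> rt M \<Longrightarrow> vanc M (par M v) u \<Longrightarrow> vanc M v u"

text \<open>Points of the topological realisation, parametrised by height: a point is a
  pair (v, h) with v a non-root vertex and h in [f v, f (parent v)) (on the edge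
  from v to its parent), or the root (rt, infinity). The second component is f.\<close>
definition pts :: "'v mtree \<Rightarrow> ('v \<times> ereal) set" where
  "pts M = {(v, ereal h) | v h. v \<in> verts M - {rt M} \<and> hv M v \<le> ereal h
                                \<and> ereal h < hv M (par M v)} \<union> {(rt M, \<infinity>)}"

definition anc_le :: "'v mtree \<Rightarrow> 'v \<times> ereal \<Rightarrow> 'v \<times> ereal \<Rightarrow> bool" where
  "anc_le M x y \<longleftrightarrow> x \<in> pts M \<and> y \<in> pts M \<and> snd x \<le> snd y \<and> vanc M (fst x) (fst y)"

definition anc :: "'v mtree \<Rightarrow> ereal \<Rightarrow> 'v \<times> ereal \<Rightarrow> 'v \<times> ereal" where
  "anc M h x = (THE y. anc_le M x y \<and> snd y = h)"

definition shift :: "'v mtree \<Rightarrow> real \<Rightarrow> 'v \<times> ereal \<Rightarrow> 'v \<times> ereal" where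
  "shift M d x = anc M (snd x + ereal d) x"

definition layer :: "'v mtree \<Rightarrow> real \<Rightarrow> ('v \<times> ereal) set" where
  "layer M h = {x \<in> pts M. snd x = ereal h}"

definition layer_order :: "'v mtree \<Rightarrow> (real \<Rightarrow> (('v \<times> ereal) \<times> ('v \<times> ereal)) set) \<Rightarrow> bool" where
  "layer_order M lo \<longleftrightarrow>
     (\<forall>h\<ge>0. lo h \<subseteq> layer M h \<times> layer M h \<and> linear_order_on (layer M h) (lo h)) \<and>
     (\<forall>h1 h2 x1 x2. 0 \<le> h1 \<longrightarrow> h1 \<le> h2 \<longrightarrow> (x1, x2) \<in> lo h1 \<longrightarrow>
        (anc M (ereal h2) x1, anc M (ereal h2) x2) \<in> lo h2)"

text \<open>Topology of the realisation: path metric along edges, measured in the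
  reparametrised height phi(h) = h/(1+|h|), phi(infinity) = 1, which makes every
  edge (including the one to the root) of finite length; this metric induces
  the CW topology of the finite graph realisation.\<close>
fun phi :: "ereal \<Rightarrow> real" where
  "phi (ereal h) = h / (1 + \<bar>h\<bar>)"
| "phi _ = 1"

definition mdist :: "'v mtree \<Rightarrow> 'v \<times> ereal \<Rightarrow> 'v \<times> ereal \<Rightarrow> real" where
  "mdist M x y = Inf {2 * phi (snd z) - phi (snd x) - phi (snd y) | z. anc_le M x z \<and> anc_le M y z}"

definition mt_continuous :: "'v mtree \<Rightarrow> 'w mtree \<Rightarrow> ('v \<times> ereal \<Rightarrow> 'w \<times> ereal) \<Rightarrow> bool" where
  "mt_continuous M M' a \<longleftrightarrow>
     (\<forall>x\<in>pts M. \<forall>e>0. \<exists>d>0. \<forall>y\<in>pts M. mdist M x y < d \<longrightarrow> mdist M' (a x) (a y) < e)"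

definition delta_interleaving ::
  "'v mtree \<Rightarrow> 'w mtree \<Rightarrow> real \<Rightarrow> ('v \<times> ereal \<Rightarrow> 'w \<times> ereal) \<Rightarrow> ('w \<times> ereal \<Rightarrow> 'v \<times> ereal) \<Rightarrow> bool" where
  "delta_interleaving M M' d a b \<longleftrightarrow>
     a \<in> pts M \<rightarrow> pts M' \<and> b \<in> pts M' \<rightarrow> pts M \<and>
     mt_continuous M M' a \<and> mt_continuous M' M b \<and>
     (\<forall>x\<in>pts M. snd (a x) = snd x + ereal d \<and> b (a x) = shift M (2 * d) x) \<and>
     (\<forall>y\<in>pts M'. snd (b y) = snd y + ereal d \<and> a (b y) = shift M' (2 * d) y)"

definition monotone_map ::
  "'v mtree \<Rightarrow> (real \<Rightarrow> (('v \<times> ereal) \<times> ('v \<times> ereal)) set) \<Rightarrow>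
   'w mtree \<Rightarrow> (real \<Rightarrow> (('w \<times> ereal) \<times> ('w \<times> ereal)) set) \<Rightarrow> real \<Rightarrow>
   ('v \<times> ereal \<Rightarrow> 'w \<times> ereal) \<Rightarrow> bool" where
  "monotone_map M lo M' lo' d a \<longleftrightarrow>
     (\<forall>h x1 x2. x1 \<in> layer M h \<longrightarrow> x2 \<in> layer M h \<longrightarrow> (x1, x2) \<in> lo h \<longrightarrow>
        (a x1, a x2) \<in> lo' (h + d))"

definition lowest_anc_in :: "'v mtree \<Rightarrow> ('v \<times> ereal) set \<Rightarrow> 'v \<times> ereal \<Rightarrow> 'v \<times> ereal" where
  "lowest_anc_in M S y = (THE z. z \<in> S \<and> anc_le M y z \<and>
                             (\<forall>z'\<in>S. anc_le M y z' \<longrightarrow> snd z \<le> snd z'))"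

definition good_map :: "'v mtree \<Rightarrow> 'w mtree \<Rightarrow> real \<Rightarrow> ('v \<times> ereal \<Rightarrow> 'w \<times> ereal) \<Rightarrow> bool" where
  "good_map M M' d a \<longleftrightarrow>
     a \<in> pts M \<rightarrow> pts M' \<and> mt_continuous M M' a \<and>
     (\<forall>x\<in>pts M. snd (a x) = snd x + ereal d) \<and>
     (\<forall>x1\<in>pts M. \<forall>x2\<in>pts M. anc_le M' (a x2) (a x1) \<longrightarrow>
         anc_le M (shift M (2 * d) x2) (shift M (2 * d) x1)) \<and>
     (\<forall>y\<in>pts M' - a ` pts M.
         \<bar>snd (lowest_anc_in M' (a ` pts M) y) - snd y\<bar> \<le> ereal (2 * d))"

end

theory Submission
  imports Defs
begin


lemma mt_D:
  assumes "merge_tree M"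
  shows "finite (verts M)" "rt M \<in> verts M" "hv M (rt M) = \<infinity>"
    "\<And>v. v \<in> verts M \<Longrightarrow> v \<noteq> rt M \<Longrightarrow> par M v \<in> verts M"
    "\<And>v. v \<in> verts M \<Longrightarrow> v \<noteq> rt M \<Longrightarrow> hv M v < hv M (par M v)"
    "\<And>v. v \<in> verts M \<Longrightarrow> v \<noteq> rt M \<Longrightarrow> \<exists>h. hv M v = ereal h"
    "\<And>v. v \<in> verts M \<Longrightarrow> v \<noteq> rt M \<Longrightarrow> \<exists>n. (par M ^^ n) v = rt M"
    "\<And>v. v \<in> verts M \<Longrightarrow> 0 \<le> hv M v"
  using assms unfolding merge_tree_def by auto

lemma vanc_verts: "vanc M v u \<Longrightarrow> merge_tree M \<Longrightarrow> v \<in> verts M \<Longrightarrow> u \<in> verts M"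
  by (induction rule: vanc.induct) (auto dest: mt_D(4))

lemma vanc_trans: "vanc M v u \<Longrightarrow> vanc M u w \<Longrightarrow> vanc M v w"
  by (induction rule: vanc.induct) (simp_all add: vanc_step)

lemma vanc_hv: "vanc M v u \<Longrightarrow> merge_tree M \<Longrightarrow> v \<in> verts M \<Longrightarrow>
   v = u \<or> (v \<noteq> rt M \<and> hv M (par M v) \<le> hv M u)"
proof (induction rule: vanc.induct)
  case (vanc_refl v) then show ?case by simp
next
  case (vanc_step v u)
  have pv: "par M v \<in> verts M" using mt_D(4)[OF vanc_step.prems(1) vanc_step.prems(2) vanc_step.hyps(1)] .
  from vanc_step.IH[OF vanc_step.prems(1) pv] show ?case
  proof
    assume "par M v = u" then show ?thesis using vanc_step.hyps(1) by auto
  next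
    assume h: "par M v \<noteq> rt M \<and> hv M (par M (par M v)) \<le> hv M u"
    have "hv M (par M v) < hv M (par M (par M v))" using mt_D(5)[OF vanc_step.prems(1) pv] h by simp
    then show ?thesis using h vanc_step.hyps(1) by (meson order_less_imp_le order_trans)
  qed
qed

lemma vanc_le: "vanc M v u \<Longrightarrow> merge_tree M \<Longrightarrow> v \<in> verts M \<Longrightarrow> hv M v \<le> hv M u"
proof -
  assume a: "vanc M v u" "merge_tree M" "v \<in> verts M"
  show "hv M v \<le> hv M u"
  proof (cases "v = u")
    case False
    then have "v \<noteq> rt M" "hv M (par M v) \<le> hv M u" using vanc_hv[OF a] by auto
    moreover have "hv M v < hv M (par M v)" using mt_D(5)[OF a(2) a(3) \<open>v \<noteq> rt M\<close>] .
    ultimately show ?thesis by simp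
  qed simp
qed

lemma vanc_chain: "vanc M v u1 \<Longrightarrow> vanc M v u2 \<Longrightarrow> vanc M u1 u2 \<or> vanc M u2 u1"
proof (induction arbitrary: u2 rule: vanc.induct)
  case (vanc_refl v) then show ?case by simp
next
  case (vanc_step v u)
  from vanc_step.prems show ?case
  proof cases
    case vanc_refl then show ?thesis using vanc_step by (auto intro: vanc.intros)
  next
    case vanc_step
    then show ?thesis using \<open>\<And>u2. vanc M (par M v) u2 \<Longrightarrow> vanc M u u2 \<or> vanc M u2 u\<close> by blast
  qed
qed

lemma vanc_root: assumes "merge_tree M" "v \<in> verts M" shows "vanc M v (rt M)"
proof -
  { fix n have "\<And>v. v \<in> verts M \<Longrightarrow> (par M ^^ n) v = rt M \<Longrightarrow> vanc M v (rt M)"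
    proof (induction n)
      case 0 then show ?case by (auto intro: vanc.intros)
    next
      case (Suc n)
      show ?case
      proof (cases "v = rt M")
        case True then show ?thesis by (auto intro: vanc.intros)
      next
        case False
        have "(par M ^^ n) (par M v) = rt M" using Suc.prems(2) unfolding funpow_Suc_right by simp
        then have "vanc M (par M v) (rt M)" using Suc.IH mt_D(4)[OF assms(1) Suc.prems(1) False] by blast
        then show ?thesis using False by (auto intro: vanc.intros)
      qed
    qed }
  moreover obtain n where "(par M ^^ n) v = rt M" using mt_D(7)[OF assms(1) assms(2)] mt_D(2)[OF assms(1)]
    by (cases "v = rt M") (metis funpow_0, auto)
  ultimately show ?thesis using assms by blast
qed

lemma vanc_antisym: "merge_tree M \<Longrightarrow> v \<in> verts M \<Longrightarrow> vanc M v u \<Longrightarrow> vanc M u v \<Longrightarrow> u = v"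
proof -
  assume a: "merge_tree M" "v \<in> verts M" "vanc M v u" "vanc M u v"
  show "u = v"
  proof (rule ccontr)
    assume ne: "u \<noteq> v"
    have uV: "u \<in> verts M" using vanc_verts[OF a(3) a(1) a(2)] .
    have "v \<noteq> rt M" "hv M (par M v) \<le> hv M u" using vanc_hv[OF a(3) a(1) a(2)] ne by auto
    moreover have "hv M v < hv M (par M v)" using mt_D(5)[OF a(1) a(2) \<open>v \<noteq> rt M\<close>] .
    moreover have "hv M u \<le> hv M v" using vanc_le[OF a(4) a(1) uV] .
    ultimately show False by simp
  qed
qed



lemma pts_cases:
  assumes "x \<in> pts M"
  obtains "x = (rt M, \<infinity>)"
  | v h where "x = (v, ereal h)" "v \<in> verts M" "v \<noteq> rt M" "hv M v \<le> ereal h" "ereal h < hv M (par M v)"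
  using assms unfolding pts_def by auto

lemma root_pts: "(rt M, \<infinity>) \<in> pts M" unfolding pts_def by auto

lemma pts_real: "v \<in> verts M \<Longrightarrow> v \<noteq> rt M \<Longrightarrow> hv M v \<le> ereal h \<Longrightarrow> ereal h < hv M (par M v) \<Longrightarrow> (v, ereal h) \<in> pts M"
  unfolding pts_def by auto

lemma pts_fst: "merge_tree M \<Longrightarrow> x \<in> pts M \<Longrightarrow> fst x \<in> verts M"
  by (erule pts_cases) (auto dest: mt_D)

lemma pts_hv: "merge_tree M \<Longrightarrow> x \<in> pts M \<Longrightarrow> hv M (fst x) \<le> snd x"
  by (erule pts_cases) (auto dest: mt_D)

lemma pts_inf: "x \<in> pts M \<Longrightarrow> snd x = \<infinity> \<Longrightarrow> x = (rt M, \<infinity>)"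
  by (erule pts_cases) auto

lemma pts_notinf: "x \<in> pts M \<Longrightarrow> snd x \<noteq> \<infinity> \<Longrightarrow>
   fst x \<noteq> rt M \<and> snd x < hv M (par M (fst x)) \<and> (\<exists>h. snd x = ereal h)"
  by (erule pts_cases) auto

lemma pts_notminf: "merge_tree M \<Longrightarrow> x \<in> pts M \<Longrightarrow> snd x \<noteq> -\<infinity>"
  by (erule pts_cases) auto

lemma anc_le_refl: "x \<in> pts M \<Longrightarrow> anc_le M x x"
  unfolding anc_le_def by (auto intro: vanc.intros)

lemma anc_le_trans: "anc_le M x y \<Longrightarrow> anc_le M y z \<Longrightarrow> anc_le M x z"
  unfolding anc_le_def by (auto intro: vanc_trans)

lemma anc_le_root: "merge_tree M \<Longrightarrow> x \<in> pts M \<Longrightarrow> anc_le M x (rt M, \<infinity>)"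
  unfolding anc_le_def using root_pts[of M] vanc_root[OF _ pts_fst] by simp

lemma anc_le_antisym: "merge_tree M \<Longrightarrow> anc_le M x y \<Longrightarrow> anc_le M y x \<Longrightarrow> x = y"
proof -
  assume MT: "merge_tree M" and a: "anc_le M x y" and b: "anc_le M y x"
  have "snd x = snd y" using a b unfolding anc_le_def by auto
  moreover have "fst x = fst y" using a b vanc_antisym[OF MT pts_fst[OF MT]] unfolding anc_le_def by metis
  ultimately show "x = y" by (simp add: prod_eq_iff)
qed

lemma anc_le_chain:
  assumes MT: "merge_tree M" and a1: "anc_le M x z1" and a2: "anc_le M x z2" and le: "snd z1 \<le> snd z2"
  shows "anc_le M z1 z2"
proof -
  have z1: "z1 \<in> pts M" and z2: "z2 \<in> pts M" and x: "x \<in> pts M"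
   and v1: "vanc M (fst x) (fst z1)" and v2: "vanc M (fst x) (fst z2)"
    using a1 a2 unfolding anc_le_def by auto
  from vanc_chain[OF v1 v2] show ?thesis
  proof
    assume "vanc M (fst z1) (fst z2)" then show ?thesis using z1 z2 le unfolding anc_le_def by auto
  next
    assume v21: "vanc M (fst z2) (fst z1)"
    show ?thesis
    proof (cases "fst z2 = fst z1")
      case True then show ?thesis using z1 z2 le unfolding anc_le_def by (auto intro: vanc.intros)
    next
      case False
      have fz2: "fst z2 \<in> verts M" using pts_fst[OF MT z2] .
      have hh: "fst z2 \<noteq> rt M" "hv M (par M (fst z2)) \<le> hv M (fst z1)"
        using vanc_hv[OF v21 MT fz2] False by auto
      show ?thesis
      proof (cases "snd z2 = \<infinity>")
        case True
        then have "z2 = (rt M, \<infinity>)" using pts_inf z2 by blast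
        then show ?thesis using hh by simp
      next
        case False
        then have "snd z2 < hv M (par M (fst z2))" using pts_notinf[OF z2] by blast
        moreover have "hv M (fst z1) \<le> snd z1" using pts_hv[OF MT z1] .
        ultimately show ?thesis using hh le by (meson leD order.trans)
      qed
    qed
  qed
qed

lemma anc_le_unique: "merge_tree M \<Longrightarrow> anc_le M x y1 \<Longrightarrow> anc_le M x y2 \<Longrightarrow> snd y1 = snd y2 \<Longrightarrow> y1 = y2"
proof -
  assume MT: "merge_tree M" and a: "anc_le M x y1" and b: "anc_le M x y2" and e: "snd y1 = snd y2"
  show "y1 = y2" using anc_le_chain[OF MT a b] anc_le_chain[OF MT b a] e anc_le_antisym[OF MT] by simp
qed

lemma anc_exists:
  assumes MT: "merge_tree M" and x: "x \<in> pts M" and h: "snd x \<le> h"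
  shows "\<exists>y. anc_le M x y \<and> snd y = h"
proof (cases "h = \<infinity>")
  case True then show ?thesis using anc_le_root[OF MT x] by (intro exI[of _ "(rt M, \<infinity>)"]) auto
next
  case False
  have "snd x \<noteq> \<infinity>" using False h by auto
  then obtain s where s: "snd x = ereal s" using pts_notinf[OF x] by blast
  from h s False obtain r where r: "h = ereal r" by (cases h) auto
  define v where "v = fst x"
  have vV: "v \<in> verts M" using pts_fst[OF MT x] v_def by simp
  define U where "U = {u. vanc M v u \<and> hv M u \<le> ereal r}"
  have finU: "finite U" using vanc_verts[OF _ MT vV] mt_D(1)[OF MT] unfolding U_def
    by (intro rev_finite_subset[OF mt_D(1)[OF MT]]) blast
  have vU: "v \<in> U" unfolding U_def using pts_hv[OF MT x] h r s v_def by (auto intro: vanc.intros order.trans)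
  obtain u where uU: "u \<in> U" and umax: "\<forall>u'\<in>U. hv M u' \<le> hv M u"
  proof -
    have "Max (hv M ` U) \<in> hv M ` U" using finU vU by (intro Max_in) auto
    then obtain u where "u \<in> U" "hv M u = Max (hv M ` U)" by auto
    then show ?thesis using that finU by auto
  qed
  have uV: "u \<in> verts M" using uU vanc_verts[OF _ MT vV] unfolding U_def by blast
  have urt: "u \<noteq> rt M" using uU mt_D(3)[OF MT] unfolding U_def by auto
  have "vanc M v (par M u)" using uU urt unfolding U_def by (auto intro: vanc_trans[of M v u] vanc_step vanc_refl)
  moreover have "hv M u < hv M (par M u)" using mt_D(5)[OF MT uV urt] .
  ultimately have pu: "ereal r < hv M (par M u)"
  proof -
    assume a1: "vanc M v (par M u)" and a2: "hv M u < hv M (par M u)"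
    show ?thesis
    proof (rule ccontr)
      assume "\<not> ereal r < hv M (par M u)"
      then have "par M u \<in> U" using a1 unfolding U_def by auto
      then show False using umax a2 by force
    qed
  qed
  have "(u, ereal r) \<in> pts M" using pts_real[OF uV urt _ pu] uU unfolding U_def by auto
  then show ?thesis using x uU h r unfolding anc_le_def U_def v_def by (intro exI[of _ "(u, ereal r)"]) auto
qed

lemma anc_spec:
  assumes MT: "merge_tree M" and x: "x \<in> pts M" and h: "snd x \<le> h"
  shows "anc_le M x (anc M h x)" "snd (anc M h x) = h"
proof -
  have "\<exists>!y. anc_le M x y \<and> snd y = h" using anc_exists[OF assms] anc_le_unique[OF MT] by blast
  then have "anc_le M x (anc M h x) \<and> snd (anc M h x) = h" unfolding anc_def by (rule theI')
  then show "anc_le M x (anc M h x)" "snd (anc M h x) = h" by auto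
qed

lemma anc_eq: "merge_tree M \<Longrightarrow> anc_le M x y \<Longrightarrow> anc M (snd y) x = y"
  unfolding anc_def by (rule the_equality) (auto intro: anc_le_unique)

lemma anc_le_pts: "anc_le M x y \<Longrightarrow> x \<in> pts M \<and> y \<in> pts M"
  unfolding anc_le_def by auto

lemma sep1:
  assumes MT: "merge_tree M" and w: "w \<in> pts M" and w': "w' \<in> pts M" and eq: "snd w = snd w'"
    and ninf: "snd w \<noteq> \<infinity>" and ne: "w \<noteq> w'" and a: "anc_le M w z" and a': "anc_le M w' z"
  shows "hv M (par M (fst w)) \<le> snd z"
proof -
  have nw: "fst w \<noteq> rt M" "snd w < hv M (par M (fst w))" using pts_notinf[OF w ninf] by auto
  have nw': "fst w' \<noteq> rt M" "snd w' < hv M (par M (fst w'))" using pts_notinf[OF w'] ninf eq by auto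
  have fne: "fst w \<noteq> fst w'" using ne eq by (simp add: prod_eq_iff)
  have v: "vanc M (fst w) (fst z)" and v': "vanc M (fst w') (fst z)" using a a' unfolding anc_le_def by auto
  have z: "z \<in> pts M" using a anc_le_pts by blast
  have hz: "hv M (fst z) \<le> snd z" using pts_hv[OF MT z] .
  show ?thesis
  proof (cases "fst z = fst w")
    case True
    then have "hv M (par M (fst w')) \<le> hv M (fst w)"
      using vanc_hv[OF v' MT pts_fst[OF MT w']] fne by auto
    moreover have "hv M (fst w) \<le> snd w" using pts_hv[OF MT w] .
    ultimately have "hv M (par M (fst w')) \<le> snd w'" using eq by (metis order.trans)
    then show ?thesis using nw'(2) by simp
  next
    case False
    then have "hv M (par M (fst w)) \<le> hv M (fst z)"
      using vanc_hv[OF v MT pts_fst[OF MT w]] by auto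
    then show ?thesis using hz by auto
  qed
qed

lemma sep2:
  assumes MT: "merge_tree M" and a: "anc_le M p0 p" and ninf: "snd p \<noteq> \<infinity>"
  shows "hv M (par M (fst p0)) \<le> hv M (par M (fst p))"
proof -
  have p: "p \<in> pts M" and p0: "p0 \<in> pts M" and v: "vanc M (fst p0) (fst p)" using a unfolding anc_le_def by auto
  show ?thesis
  proof (cases "fst p0 = fst p")
    case True then show ?thesis by simp
  next
    case False
    then have "hv M (par M (fst p0)) \<le> hv M (fst p)" using vanc_hv[OF v MT pts_fst[OF MT p0]] by auto
    moreover have "hv M (fst p) \<le> snd p" using pts_hv[OF MT p] .
    moreover have "snd p < hv M (par M (fst p))" using pts_notinf[OF p ninf] by auto
    ultimately show ?thesis by auto
  qed
qed

lemma desc_edge: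
  assumes MT: "merge_tree M" and a: "anc_le M p q" and ninf: "snd q \<noteq> \<infinity>" and h: "hv M (fst q) \<le> snd p"
  shows "fst p = fst q"
proof (rule ccontr)
  assume ne: "fst p \<noteq> fst q"
  have p: "p \<in> pts M" and v: "vanc M (fst p) (fst q)" and le: "snd p \<le> snd q" using a unfolding anc_le_def by auto
  have "snd p \<noteq> \<infinity>" using le ninf by auto
  then have "snd p < hv M (par M (fst p))" using pts_notinf[OF p] by auto
  moreover have "hv M (par M (fst p)) \<le> hv M (fst q)" using vanc_hv[OF v MT pts_fst[OF MT p]] ne by auto
  ultimately show False using h by auto
qed



lemma phi_inf[simp]: "phi \<infinity> = 1"
  using phi.simps(2) by (simp only: PInfty_eq_infinity)

lemma phi_minf[simp]: "phi (-\<infinity>) = 1"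
  using phi.simps(3) by (simp only: MInfty_eq_minfinity)

lemma phi_ereal[simp]: "phi (ereal x) = x / (1 + \<bar>x\<bar>)"
  by simp

lemma phi_pos_form: "0 \<le> (x::real) \<Longrightarrow> x / (1 + \<bar>x\<bar>) = 1 - 1 / (1 + x)"
  by (simp add: field_simps)

lemma phi_neg_form: "(x::real) \<le> 0 \<Longrightarrow> x / (1 + \<bar>x\<bar>) = 1 / (1 - x) - 1"
  by (simp add: field_simps)

lemma phi_real_mono: "(x::real) \<le> y \<Longrightarrow> x / (1 + \<bar>x\<bar>) \<le> y / (1 + \<bar>y\<bar>)"
proof -
  assume xy: "x \<le> y"
  consider "0 \<le> x" | "y \<le> 0" | "x < 0" "0 < y" by linarith
  then show ?thesis
  proof cases
    case 1
    then have "1 / (1 + y) \<le> 1 / (1 + x)" using xy by (intro divide_left_mono) auto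
    then show ?thesis using 1 xy phi_pos_form[of x] phi_pos_form[of y] by simp
  next
    case 2
    then have "1 / (1 - x) \<le> 1 / (1 - y)" using xy by (intro divide_left_mono) auto
    then show ?thesis using 2 xy phi_neg_form[of x] phi_neg_form[of y] by simp
  next
    case 3
    have "x / (1 + \<bar>x\<bar>) \<le> 0" using 3 by (simp add: divide_nonpos_pos)
    moreover have "0 \<le> y / (1 + \<bar>y\<bar>)" using 3 by simp
    ultimately show ?thesis by linarith
  qed
qed

lemma phi_real_strict: "(x::real) < y \<Longrightarrow> x / (1 + \<bar>x\<bar>) < y / (1 + \<bar>y\<bar>)"
proof -
  assume xy: "x < y"
  consider "0 \<le> x" | "y \<le> 0" | "x < 0" "0 < y" by linarith
  then show ?thesis
  proof cases
    case 1
    then have "1 / (1 + y) < 1 / (1 + x)" using xy by (intro divide_strict_left_mono) auto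
    then show ?thesis using 1 xy phi_pos_form[of x] phi_pos_form[of y] by simp
  next
    case 2
    then have "1 / (1 - x) < 1 / (1 - y)" using xy by (intro divide_strict_left_mono) auto
    then show ?thesis using 2 xy phi_neg_form[of x] phi_neg_form[of y] by simp
  next
    case 3
    have "x / (1 + \<bar>x\<bar>) < 0" using 3 by (simp add: divide_neg_pos)
    moreover have "0 < y / (1 + \<bar>y\<bar>)" using 3 by simp
    ultimately show ?thesis by linarith
  qed
qed

lemma phi_small: "\<bar>(x::real) / (1 + \<bar>x\<bar>)\<bar> \<le> \<bar>x\<bar>"
proof -
  have "\<bar>x / (1 + \<bar>x\<bar>)\<bar> = \<bar>x\<bar> / (1 + \<bar>x\<bar>)" by simp
  also have "\<dots> \<le> \<bar>x\<bar> / 1" by (intro divide_left_mono) auto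
  finally show ?thesis by simp
qed

lemma phi_real_lip: "(x::real) \<le> y \<Longrightarrow> y / (1 + \<bar>y\<bar>) - x / (1 + \<bar>x\<bar>) \<le> y - x"
proof -
  assume xy: "x \<le> y"
  consider "0 \<le> x" | "y \<le> 0" | "x < 0" "0 < y" by linarith
  then show ?thesis
  proof cases
    case 1
    have "1 / (1 + x) - 1 / (1 + y) = (y - x) / ((1 + x) * (1 + y))" using 1 xy by (simp add: field_simps)
    also have "\<dots> \<le> (y - x) / 1"
    proof -
      have "0 \<le> x * y" using 1 xy by simp
      then have d: "1 \<le> (1 + x) * (1 + y)" using 1 xy by (simp add: algebra_simps)
      show ?thesis using divide_left_mono[OF d, of "y - x"] d xy by simp
    qed
    finally show ?thesis using 1 xy phi_pos_form[of x] phi_pos_form[of y] by simp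
  next
    case 2
    have "1 / (1 - y) - 1 / (1 - x) = (y - x) / ((1 - x) * (1 - y))" using 2 xy by (simp add: field_simps)
    also have "\<dots> \<le> (y - x) / 1"
    proof -
      have "0 \<le> x * y" using 2 xy mult_nonpos_nonpos[of x y] by linarith
      then have d: "1 \<le> (1 - x) * (1 - y)" using 2 xy by (simp add: algebra_simps)
      show ?thesis using divide_left_mono[OF d, of "y - x"] d xy by simp
    qed
    finally show ?thesis using 2 xy phi_neg_form[of x] phi_neg_form[of y] by simp
  next
    case 3
    have "\<bar>x / (1 + \<bar>x\<bar>)\<bar> \<le> \<bar>x\<bar>" "\<bar>y / (1 + \<bar>y\<bar>)\<bar> \<le> \<bar>y\<bar>" by (rule phi_small)+
    then show ?thesis using 3 by (simp add: abs_if split: if_splits)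
  qed
qed

lemma phi_bound: "\<bar>phi x\<bar> \<le> 1"
proof (cases x)
  case (real r)
  have "\<bar>r\<bar> / (1 + \<bar>r\<bar>) \<le> 1" by simp
  then show ?thesis using real by simp
qed auto

lemma phi_real_lt1: "phi (ereal x) < 1"
  by simp

lemma phi_mono: "a \<le> b \<Longrightarrow> a \<noteq> -\<infinity> \<Longrightarrow> phi a \<le> phi b"
proof (cases a)
  case (real r)
  assume ab: "a \<le> b"
  show ?thesis
  proof (cases b)
    case (real s) then show ?thesis using ab \<open>a = ereal r\<close> phi_real_mono[of r s] by simp
  next
    case PInf then show ?thesis using \<open>a = ereal r\<close> phi_real_lt1[of r] by simp
  next
    case MInf then show ?thesis using ab \<open>a = ereal r\<close> by simp
  qed
next
  case PInf then show "a \<le> b \<Longrightarrow> ?thesis" by simp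
qed simp

lemma phi_strict: "a < b \<Longrightarrow> a \<noteq> -\<infinity> \<Longrightarrow> phi a < phi b"
proof (cases a)
  case (real r)
  assume ab: "a < b"
  show ?thesis
  proof (cases b)
    case (real s) then show ?thesis using ab \<open>a = ereal r\<close> phi_real_strict[of r s] by simp
  next
    case PInf then show ?thesis using \<open>a = ereal r\<close> phi_real_lt1[of r] by simp
  next
    case MInf then show ?thesis using ab \<open>a = ereal r\<close> by simp
  qed
next
  case PInf then show "a < b \<Longrightarrow> ?thesis" by simp
qed simp

lemma phi_lip: "x \<le> y \<Longrightarrow> phi (ereal y) - phi (ereal x) \<le> y - x"
  using phi_real_lip by simp

lemma mdist_low:
  assumes MT: "merge_tree M" and x: "x \<in> pts M" and y: "y \<in> pts M"
    and H: "\<And>z. anc_le M x z \<Longrightarrow> anc_le M y z \<Longrightarrow> c \<le> 2 * phi (snd z) - phi (snd x) - phi (snd y)"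
  shows "c \<le> mdist M x y"
  unfolding mdist_def
proof (rule cInf_greatest)
  show "{2 * phi (snd z) - phi (snd x) - phi (snd y) |z. anc_le M x z \<and> anc_le M y z} \<noteq> {}"
    using anc_le_root[OF MT x] anc_le_root[OF MT y] by blast
qed (use H in auto)

lemma mdist_up:
  assumes "anc_le M x z" "anc_le M y z"
  shows "mdist M x y \<le> 2 * phi (snd z) - phi (snd x) - phi (snd y)"
  unfolding mdist_def
proof (rule cInf_lower)
  show "bdd_below {2 * phi (snd z) - phi (snd x) - phi (snd y) |z. anc_le M x z \<and> anc_le M y z}"
  proof (rule bdd_belowI[of _ "-4"])
    fix r assume "r \<in> {2 * phi (snd z) - phi (snd x) - phi (snd y) |z. anc_le M x z \<and> anc_le M y z}"
    then obtain z where "r = 2 * phi (snd z) - phi (snd x) - phi (snd y)" by auto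
    then show "-4 \<le> r" using phi_bound[of "snd z"] phi_bound[of "snd x"] phi_bound[of "snd y"] by (auto simp: abs_le_iff)
  qed
qed (use assms in blast)



lemma anc_commute:
  fixes M :: "'v mtree" and N :: "'w mtree" and b and d :: real
  assumes MT: "merge_tree M" and NT: "merge_tree N"
    and bp: "\<And>y. y \<in> pts M \<Longrightarrow> b y \<in> pts N"
    and bc: "mt_continuous M N b"
    and bh: "\<And>y. y \<in> pts M \<Longrightarrow> snd (b y) = snd y + ereal d"
    and y: "y \<in> pts M" and s0: "snd y = ereal s0" and t0: "s0 \<le> t0"
  shows "b (anc M (ereal t0) y) = anc N (ereal (t0 + d)) (b y)"
proof -
  define A where "A t = anc M (ereal t) y" for t
  define B where "B t = anc N (ereal (t + d)) (b y)" for t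
  have byp: "b y \<in> pts N" using bp[OF y] .
  have sby: "snd (b y) = ereal (s0 + d)" using bh[OF y] s0 by simp
  have A: "anc_le M y (A t) \<and> snd (A t) = ereal t" if "s0 \<le> t" for t
    using anc_spec[OF MT y, of "ereal t"] s0 that unfolding A_def by auto
  have B: "anc_le N (b y) (B t) \<and> snd (B t) = ereal (t + d)" if "s0 \<le> t" for t
    using anc_spec[OF NT byp, of "ereal (t + d)"] sby that unfolding B_def by auto
  have Ap: "A t \<in> pts M" if "s0 \<le> t" for t using A[OF that] anc_le_pts by blast
  have Bp: "B t \<in> pts N" if "s0 \<le> t" for t using B[OF that] anc_le_pts by blast
  have bA: "b (A t) \<in> pts N \<and> snd (b (A t)) = ereal (t + d)" if "s0 \<le> t" for t
    using bp[OF Ap[OF that]] bh[OF Ap[OF that]] A[OF that] by simp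
  have AA: "anc_le M (A t) (A t')" if "s0 \<le> t" "t \<le> t'" for t t'
    using anc_le_chain[OF MT conjunct1[OF A[OF that(1)]] conjunct1[OF A[of t']]] A that by simp
  have BB: "anc_le N (B t) (B t')" if "s0 \<le> t" "t \<le> t'" for t t'
    using anc_le_chain[OF NT conjunct1[OF B[OF that(1)]] conjunct1[OF B[of t']]] B that by simp
  have P0: "b (A s0) = B s0"
  proof -
    have "A s0 = y" using anc_eq[OF MT anc_le_refl[OF y]] s0 unfolding A_def by simp
    moreover have "B s0 = b y" using anc_eq[OF NT anc_le_refl[OF byp]] sby unfolding B_def by simp
    ultimately show ?thesis by simp
  qed
  have cont: "\<exists>\<delta>>0. \<forall>p\<in>pts M. mdist M x p < \<delta> \<longrightarrow> mdist N (b x) (b p) < e"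
    if "x \<in> pts M" "e > 0" for x e
    using bc that unfolding mt_continuous_def by blast
  have cpos: "0 < phi (hv N (par N (fst (B s)))) - phi (ereal (s + d))"
    and Hninf: "hv N (par N (fst (B s))) \<noteq> -\<infinity>" if "s0 \<le> s" for s
  proof -
    have "snd (B s) < hv N (par N (fst (B s)))" using pts_notinf[OF Bp[OF that]] B[OF that] by auto
    then have lt: "ereal (s + d) < hv N (par N (fst (B s)))" using B[OF that] by simp
    from phi_strict[OF lt] show "0 < phi (hv N (par N (fst (B s)))) - phi (ereal (s + d))" by simp
    from lt show "hv N (par N (fst (B s))) \<noteq> -\<infinity>" by auto
  qed
  show ?thesis
  proof (rule ccontr)
    assume nP: "\<not> ?thesis"
    define Bad where "Bad = {t. s0 \<le> t \<and> b (A t) \<noteq> B t}"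
    have t0B: "t0 \<in> Bad" using nP t0 unfolding Bad_def A_def B_def by simp
    have bddB: "bdd_below Bad" unfolding Bad_def by (rule bdd_belowI[of _ s0]) auto
    define s where "s = Inf Bad"
    have s0s: "s0 \<le> s" unfolding s_def using t0B by (intro cInf_greatest) (auto simp: Bad_def)
    have below: "b (A t) = B t" if "s0 \<le> t" "t < s" for t
    proof (rule ccontr)
      assume "b (A t) \<noteq> B t"
      then have "t \<in> Bad" using that unfolding Bad_def by simp
      then have "s \<le> t" unfolding s_def using bddB by (rule cInf_lower)
      then show False using that by simp
    qed
    define H where "H = hv N (par N (fst (B s)))"
    define c where "c = phi H - phi (ereal (s + d))"
    have c0: "0 < c" unfolding c_def H_def using cpos[OF s0s] .
    have Hn: "H \<noteq> -\<infinity>" unfolding H_def using Hninf[OF s0s] .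
    have Ps: "b (A s) = B s"
    proof (cases "s = s0")
      case True then show ?thesis using P0 by simp
    next
      case False
      then have ss0: "s0 < s" using s0s by simp
      show ?thesis
      proof (rule ccontr)
        assume ne: "b (A s) \<noteq> B s"
        obtain \<delta> where d0: "\<delta> > 0" and dH: "\<forall>p\<in>pts M. mdist M (A s) p < \<delta> \<longrightarrow> mdist N (b (A s)) (b p) < c"
          using cont[OF Ap[OF s0s] c0] by blast
        define t where "t = max s0 (s - \<delta> / 2)"
        have st: "s0 \<le> t" "t < s" "s - t < \<delta>" unfolding t_def using ss0 d0 by auto
        have Pt: "b (A t) = B t" using below st by simp
        have "mdist M (A s) (A t) \<le> 2 * phi (snd (A s)) - phi (snd (A s)) - phi (snd (A t))"
          by (rule mdist_up[OF anc_le_refl[OF Ap[OF s0s]] AA]) (use st in auto)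
        also have "\<dots> = phi (ereal s) - phi (ereal t)" using A st s0s by simp
        also have "\<dots> \<le> s - t" using phi_lip[of t s] st by simp
        finally have "mdist M (A s) (A t) < \<delta>" using st by simp
        then have up: "mdist N (b (A s)) (B t) < c" using dH Ap[OF st(1)] Pt by auto
        have "c \<le> mdist N (b (A s)) (B t)"
        proof (rule mdist_low[OF NT conjunct1[OF bA[OF s0s]] Bp[OF st(1)]])
          fix z assume z1: "anc_le N (b (A s)) z" and z2: "anc_le N (B t) z"
          have "snd (b (A s)) \<le> snd z" using z1 unfolding anc_le_def by simp
          then have zs: "snd (B s) \<le> snd z" using bA[OF s0s] B[OF s0s] by simp
          have BtBs: "anc_le N (B t) (B s)" using BB st by simp
          have Bsz: "anc_le N (B s) z" using anc_le_chain[OF NT BtBs z2 zs] .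
          have "H \<le> snd z" unfolding H_def
            by (rule sep1[OF NT Bp[OF s0s] conjunct1[OF bA[OF s0s]] _ _ _ Bsz z1])
               (use bA[OF s0s] B[OF s0s] ne in auto)
          then have "phi H \<le> phi (snd z)" using phi_mono Hn by blast
          moreover have "phi (ereal (t + d)) \<le> phi (ereal (s + d))" using phi_real_mono[of "t + d" "s + d"] st by simp
          ultimately show "c \<le> 2 * phi (snd z) - phi (snd (b (A s))) - phi (snd (B t))"
            using bA[OF s0s] B[OF st(1)] c0 unfolding c_def by simp
        qed
        with up show False by simp
      qed
    qed
    obtain \<delta> where d0: "\<delta> > 0" and dH: "\<forall>p\<in>pts M. mdist M (A s) p < \<delta> \<longrightarrow> mdist N (b (A s)) (b p) < c"
      using cont[OF Ap[OF s0s] c0] by blast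
    define \<epsilon> where "\<epsilon> = min \<delta> (c / 2)"
    have e0: "\<epsilon> > 0" unfolding \<epsilon>_def using d0 c0 by simp
    have above: "b (A t) = B t" if st: "s \<le> t" "t < s + \<epsilon>" for t
    proof (rule ccontr)
      assume ne: "b (A t) \<noteq> B t"
      have st0: "s0 \<le> t" using st s0s by simp
      have "mdist M (A s) (A t) \<le> 2 * phi (snd (A t)) - phi (snd (A s)) - phi (snd (A t))"
        by (rule mdist_up[OF AA anc_le_refl[OF Ap[OF st0]]]) (use st s0s in auto)
      also have "\<dots> = phi (ereal t) - phi (ereal s)" using A st0 s0s by simp
      also have "\<dots> \<le> t - s" using phi_lip[of s t] st by simp
      finally have "mdist M (A s) (A t) < \<delta>" using st unfolding \<epsilon>_def by simp
      then have up: "mdist N (B s) (b (A t)) < c" using dH Ap[OF st0] Ps by auto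
      have "c \<le> mdist N (B s) (b (A t))"
      proof (rule mdist_low[OF NT Bp[OF s0s] conjunct1[OF bA[OF st0]]])
        fix z assume z1: "anc_le N (B s) z" and z2: "anc_le N (b (A t)) z"
        have "snd (b (A t)) \<le> snd z" using z2 unfolding anc_le_def by simp
        then have zs: "snd (B t) \<le> snd z" using bA[OF st0] B[OF st0] by simp
        have BsBt: "anc_le N (B s) (B t)" using BB st s0s by simp
        have Btz: "anc_le N (B t) z" using anc_le_chain[OF NT BsBt z1 zs] .
        have "hv N (par N (fst (B t))) \<le> snd z"
          by (rule sep1[OF NT Bp[OF st0] conjunct1[OF bA[OF st0]] _ _ _ Btz z2])
             (use bA[OF st0] B[OF st0] ne in auto)
        moreover have "H \<le> hv N (par N (fst (B t)))" unfolding H_def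
          by (rule sep2[OF NT BsBt]) (use B[OF st0] in simp)
        ultimately have "phi H \<le> phi (snd z)" using phi_mono Hn by (meson order.trans)
        moreover have "phi (ereal (t + d)) - phi (ereal (s + d)) \<le> t - s" using phi_real_lip[of "s + d" "t + d"] st by simp
        moreover have "t - s < c / 2" using st unfolding \<epsilon>_def by simp
        ultimately show "c \<le> 2 * phi (snd z) - phi (snd (B s)) - phi (snd (b (A t)))"
          using bA[OF st0] B[OF s0s] c0 st unfolding c_def by (simp; linarith)
      qed
      with up show False by simp
    qed
    have "Inf Bad < s + \<epsilon>" using e0 unfolding s_def by simp
    then obtain t where tB: "t \<in> Bad" and tl: "t < s + \<epsilon>" using cInf_lessD t0B by blast
    have "s \<le> t" unfolding s_def using tB bddB by (rule cInf_lower)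
    then have "b (A t) = B t" using above tl by simp
    then show False using tB unfolding Bad_def by simp
  qed
qed

lemma anc_pres:
  fixes M :: "'v mtree" and N :: "'w mtree" and b and d :: real
  assumes MT: "merge_tree M" and NT: "merge_tree N"
    and bp: "\<And>y. y \<in> pts M \<Longrightarrow> b y \<in> pts N"
    and bc: "mt_continuous M N b"
    and bh: "\<And>y. y \<in> pts M \<Longrightarrow> snd (b y) = snd y + ereal d"
    and yy: "anc_le M y y'"
  shows "anc_le N (b y) (b y')"
proof -
  have y: "y \<in> pts M" and y': "y' \<in> pts M" using anc_le_pts[OF yy] by auto
  have byp: "b y \<in> pts N" using bp[OF y] .
  show ?thesis
  proof (cases "snd y' = \<infinity>")
    case True
    then have "y' = (rt M, \<infinity>)" using pts_inf y' by blast
    then have "snd (b y') = \<infinity>" using bh[OF y'] by simp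
    then have "b y' = (rt N, \<infinity>)" using pts_inf bp[OF y'] by blast
    then show ?thesis using anc_le_root[OF NT byp] by simp
  next
    case False
    then obtain t where t: "snd y' = ereal t" using pts_notinf[OF y'] by blast
    have "snd y \<noteq> \<infinity>" using False yy unfolding anc_le_def by auto
    then obtain s0 where s0: "snd y = ereal s0" using pts_notinf[OF y] by blast
    have st: "s0 \<le> t" using yy s0 t unfolding anc_le_def by simp
    have "y' = anc M (ereal t) y" using anc_eq[OF MT yy] t by simp
    then have "b y' = anc N (ereal (t + d)) (b y)"
      using anc_commute[OF MT NT bp bc bh y s0 st] by simp
    moreover have "snd (b y) \<le> ereal (t + d)" using bh[OF y] s0 st by simp
    ultimately show ?thesis using anc_spec(1)[OF NT byp] by simp
  qed
qed



lemma finite_gap: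
  fixes F :: "real set"
  assumes "finite F"
  shows "\<exists>\<epsilon>>0. \<forall>r\<in>F. ts < r \<longrightarrow> ts + \<epsilon> \<le> r"
proof (cases "{r\<in>F. ts < r} = {}")
  case True then show ?thesis by (intro exI[of _ 1]) auto
next
  case False
  define G where "G = {r\<in>F. ts < r}"
  have fG: "finite G" using assms unfolding G_def by simp
  have "Min G \<in> G" using fG False unfolding G_def by (intro Min_in) auto
  then have "ts < Min G" unfolding G_def by simp
  moreover have "\<forall>r\<in>F. ts < r \<longrightarrow> Min G \<le> r" using fG unfolding G_def by auto
  ultimately show ?thesis by (intro exI[of _ "Min G - ts"]) auto
qed

lemma g3:
  fixes M :: "'v mtree" and N :: "'w mtree" and a b and d :: real
  assumes MT: "merge_tree M" and NT: "merge_tree N"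
    and ap: "\<And>x. x \<in> pts M \<Longrightarrow> a x \<in> pts N"
    and ac: "mt_continuous M N a"
    and ah: "\<And>x. x \<in> pts M \<Longrightarrow> snd (a x) = snd x + ereal d"
    and bp: "\<And>y. y \<in> pts N \<Longrightarrow> b y \<in> pts M"
    and ab: "\<And>y. y \<in> pts N \<Longrightarrow> a (b y) = shift N (2 * d) y"
    and d0: "0 \<le> d"
    and y: "y \<in> pts N" and yn: "y \<notin> a ` pts M"
  shows "\<bar>snd (lowest_anc_in N (a ` pts M) y) - snd y\<bar> \<le> ereal (2 * d)"
proof -
  have ninf: "snd y \<noteq> \<infinity>"
  proof
    assume "snd y = \<infinity>"
    then have yr: "y = (rt N, \<infinity>)" using pts_inf y by blast
    have "snd (a (rt M, \<infinity>)) = \<infinity>" using ah[OF root_pts] by simp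
    then have "a (rt M, \<infinity>) = (rt N, \<infinity>)" using pts_inf ap[OF root_pts] by blast
    then show False using yn yr root_pts[of M] by (metis image_eqI)
  qed
  then obtain s where s: "snd y = ereal s" using pts_notinf[OF y] by blast
  define C where "C t = anc N (ereal t) y" for t
  have C: "anc_le N y (C t) \<and> snd (C t) = ereal t" if "s \<le> t" for t
    using anc_spec[OF NT y, of "ereal t"] s that unfolding C_def by auto
  have Cp: "C t \<in> pts N" if "s \<le> t" for t using C[OF that] anc_le_pts by blast
  define S where "S = {t. s \<le> t \<and> C t \<in> a ` pts M}"
  have s2: "s + 2 * d \<in> S"
  proof -
    have "a (b y) = C (s + 2 * d)" using ab[OF y] s unfolding shift_def C_def by simp
    then have "C (s + 2 * d) \<in> a ` pts M" using bp[OF y] by (metis image_eqI)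
    moreover have "s \<le> s + 2 * d" using d0 by simp
    ultimately show ?thesis unfolding S_def by simp
  qed
  have bddS: "bdd_below S" unfolding S_def by (rule bdd_belowI[of _ s]) auto
  define ts where "ts = Inf S"
  have sts: "s \<le> ts" unfolding ts_def
  proof (rule cInf_greatest)
    show "S \<noteq> {}" using s2 by blast
  qed (simp add: S_def)
  have ts2: "ts \<le> s + 2 * d" unfolding ts_def using s2 bddS by (rule cInf_lower)
  define z0 where "z0 = C ts"
  have z0p: "z0 \<in> pts N" and z0y: "anc_le N y z0" and z0h: "snd z0 = ereal ts"
    using Cp[OF sts] C[OF sts] unfolding z0_def by auto
  define u where "u = fst z0"
  have z0eq: "z0 = (u, ereal ts)" using z0h unfolding u_def by (simp add: prod_eq_iff)
  have uinfo: "u \<noteq> rt N" "ereal ts < hv N (par N u)" "hv N u \<le> ereal ts" "u \<in> verts N"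
    using pts_notinf[OF z0p] z0h pts_hv[OF NT z0p] pts_fst[OF NT z0p] unfolding u_def by auto
  have tsS: "ts \<in> S"
  proof -
    define F where "F = (\<lambda>v. real_of_ereal (hv M v) + d) ` verts M \<union> (\<lambda>w. real_of_ereal (hv N w)) ` verts N"
    have fF: "finite F" unfolding F_def using mt_D(1)[OF MT] mt_D(1)[OF NT] by simp
    obtain \<epsilon> where e0: "\<epsilon> > 0" and eF: "\<forall>r\<in>F. ts < r \<longrightarrow> ts + \<epsilon> \<le> r"
      using finite_gap[OF fF] by blast
    have "Inf S < ts + \<epsilon>" using e0 unfolding ts_def by simp
    then obtain t where tS: "t \<in> S" and tl: "t < ts + \<epsilon>" using cInf_lessD s2 by blast
    have tst: "ts \<le> t" unfolding ts_def using tS bddS by (rule cInf_lower)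
    show ?thesis
    proof (cases "t = ts")
      case True then show ?thesis using tS by simp
    next
      case False
      then have tgt: "ts < t" using tst by simp
      have st: "s \<le> t" using sts tst by simp
      obtain x where x: "x \<in> pts M" and ax: "C t = a x" using tS unfolding S_def by auto
      have tpar: "ereal t < hv N (par N u)"
      proof (cases "par N u = rt N")
        case True then show ?thesis using mt_D(3)[OF NT] by simp
      next
        case False
        have puV: "par N u \<in> verts N" using mt_D(4)[OF NT uinfo(4) uinfo(1)] .
        obtain p where p: "hv N (par N u) = ereal p" using mt_D(6)[OF NT puV False] by blast
        have "p \<in> F" unfolding F_def using puV p by (metis UnI2 image_eqI real_of_ereal.simps(1))
        moreover have "ts < p" using uinfo(2) p by simp
        ultimately have "ts + \<epsilon> \<le> p" using eF by blast
        then show ?thesis using tl p by simp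
      qed
      have utp: "(u, ereal t) \<in> pts N" using pts_real[OF uinfo(4) uinfo(1) _ tpar] uinfo(3) tst by (simp add: order_trans)
      have "anc_le N z0 (u, ereal t)" using z0p utp z0eq tst unfolding anc_le_def by (auto intro: vanc.intros)
      then have yut: "anc_le N y (u, ereal t)" using anc_le_trans z0y by blast
      have Ct: "C t = (u, ereal t)" using anc_eq[OF NT yut] unfolding C_def by simp
      have sax: "snd (a x) = ereal t" using ax Ct by (metis snd_conv)
      have sx: "snd x = ereal (t - d)" using ah[OF x] sax by (cases "snd x") auto
      define v where "v = fst x"
      have xeq: "x = (v, ereal (t - d))" using sx unfolding v_def by (simp add: prod_eq_iff)
      have vinfo: "v \<noteq> rt M" "ereal (t - d) < hv M (par M v)" "hv M v \<le> ereal (t - d)" "v \<in> verts M"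
        using pts_notinf[OF x] sx pts_hv[OF MT x] pts_fst[OF MT x] unfolding v_def by auto
      obtain hr where hr: "hv M v = ereal hr" using mt_D(6)[OF MT vinfo(4) vinfo(1)] by blast
      have "hr + d \<le> ts"
      proof (rule ccontr)
        assume "\<not> hr + d \<le> ts"
        moreover have "hr + d \<in> F" unfolding F_def using vinfo(4) hr by (metis UnI1 image_eqI real_of_ereal.simps(1))
        ultimately have "ts + \<epsilon> \<le> hr + d" using eF by simp
        moreover have "hr + d \<le> t" using vinfo(3) hr by simp
        ultimately show False using tl by simp
      qed
      then have x'p: "(v, ereal (ts - d)) \<in> pts M"
        using pts_real[OF vinfo(4) vinfo(1)] vinfo(2) hr tgt
        by (metis ereal_less_eq(3) le_diff_eq less_diff_eq order.strict_trans linorder_not_le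
            ereal_less(2) diff_strict_right_mono)
      have "anc_le M (v, ereal (ts - d)) x" using x'p x xeq tst unfolding anc_le_def by (auto intro: vanc.intros)
      then have "anc_le N (a (v, ereal (ts - d))) (a x)" using anc_pres[OF MT NT ap ac ah] by blast
      then have an: "anc_le N (a (v, ereal (ts - d))) (u, ereal t)" using ax Ct by simp
      have sa: "snd (a (v, ereal (ts - d))) = ereal ts" using ah[OF x'p] by simp
      have "fst (a (v, ereal (ts - d))) = u" using desc_edge[OF NT an] sa uinfo(3) by simp
      then have "a (v, ereal (ts - d)) = z0" using sa z0eq by (simp add: prod_eq_iff)
      then have "C ts \<in> a ` pts M" using x'p unfolding z0_def by (metis image_eqI)
      then show ?thesis using sts unfolding S_def by simp
    qed
  qed
  have z0img: "z0 \<in> a ` pts M" using tsS unfolding S_def z0_def by simp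
  have z0min: "\<forall>z'\<in>a ` pts M. anc_le N y z' \<longrightarrow> snd z0 \<le> snd z'"
  proof (intro ballI impI)
    fix z' assume zi: "z' \<in> a ` pts M" and yz: "anc_le N y z'"
    have z'p: "z' \<in> pts N" using anc_le_pts[OF yz] by simp
    show "snd z0 \<le> snd z'"
    proof (cases "snd z' = \<infinity>")
      case True then show ?thesis by simp
    next
      case False
      then obtain t' where t': "snd z' = ereal t'" using pts_notinf[OF z'p] by blast
      have st': "s \<le> t'" using yz s t' unfolding anc_le_def by simp
      have "C t' = z'" using anc_eq[OF NT yz] t' unfolding C_def by simp
      then have "t' \<in> S" using zi st' unfolding S_def by simp
      then have "ts \<le> t'" unfolding ts_def using bddS by (rule cInf_lower)
      then show ?thesis using z0h t' by simp
    qed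
  qed
  have low: "lowest_anc_in N (a ` pts M) y = z0"
    unfolding lowest_anc_in_def
  proof (rule the_equality)
    show "z0 \<in> a ` pts M \<and> anc_le N y z0 \<and> (\<forall>z'\<in>a ` pts M. anc_le N y z' \<longrightarrow> snd z0 \<le> snd z')"
      using z0img z0y z0min by blast
  next
    fix z assume zP: "z \<in> a ` pts M \<and> anc_le N y z \<and> (\<forall>z'\<in>a ` pts M. anc_le N y z' \<longrightarrow> snd z \<le> snd z')"
    have "snd z \<le> snd z0" using zP z0img z0y by blast
    moreover have "snd z0 \<le> snd z" using z0min zP by blast
    ultimately show "z = z0" using anc_le_unique[OF NT] zP z0y by (meson antisym)
  qed
  show ?thesis using low z0h s sts ts2 by simp
qed


theorem lemma39:
  fixes M :: "'v mtree" and M' :: "'w mtree" and d :: real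
    and lo :: "real \<Rightarrow> (('v \<times> ereal) \<times> ('v \<times> ereal)) set"
    and lo' :: "real \<Rightarrow> (('w \<times> ereal) \<times> ('w \<times> ereal)) set"
  assumes "merge_tree M" and "merge_tree M'"
    and "layer_order M lo" and "layer_order M' lo'"
    and "d \<ge> 0"
    and "\<exists>a b. delta_interleaving M M' d a b \<and>
               monotone_map M lo M' lo' d a \<and> monotone_map M' lo' M lo d b"
  shows "\<exists>a. good_map M M' d a \<and> monotone_map M lo M' lo' d a"
proof -
  note MT = assms(1) and NT = assms(2) and d0 = assms(5)
  obtain a b where I: "delta_interleaving M M' d a b" and ma: "monotone_map M lo M' lo' d a"
    using assms(6) by blast
  have aPi: "a \<in> pts M \<rightarrow> pts M'" and bPi: "b \<in> pts M' \<rightarrow> pts M"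
    and ac: "mt_continuous M M' a" and bc: "mt_continuous M' M b"
    and aI: "\<forall>x\<in>pts M. snd (a x) = snd x + ereal d \<and> b (a x) = shift M (2 * d) x"
    and bI: "\<forall>y\<in>pts M'. snd (b y) = snd y + ereal d \<and> a (b y) = shift M' (2 * d) y"
    using I unfolding delta_interleaving_def by auto
  have ap: "\<And>x. x \<in> pts M \<Longrightarrow> a x \<in> pts M'" using aPi by blast
  have bp: "\<And>y. y \<in> pts M' \<Longrightarrow> b y \<in> pts M" using bPi by blast
  have ah: "\<And>x. x \<in> pts M \<Longrightarrow> snd (a x) = snd x + ereal d" using aI by blast
  have ba: "\<And>x. x \<in> pts M \<Longrightarrow> b (a x) = shift M (2 * d) x" using aI by blast
  have bh: "\<And>y. y \<in> pts M' \<Longrightarrow> snd (b y) = snd y + ereal d" using bI by blast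
  have ab: "\<And>y. y \<in> pts M' \<Longrightarrow> a (b y) = shift M' (2 * d) y" using bI by blast
  have G2: "\<forall>x1\<in>pts M. \<forall>x2\<in>pts M. anc_le M' (a x2) (a x1) \<longrightarrow>
         anc_le M (shift M (2 * d) x2) (shift M (2 * d) x1)"
  proof (intro ballI impI)
    fix x1 x2 assume x1: "x1 \<in> pts M" and x2: "x2 \<in> pts M" and an: "anc_le M' (a x2) (a x1)"
    have "anc_le M (b (a x2)) (b (a x1))" using anc_pres[OF NT MT bp bc bh an] .
    then show "anc_le M (shift M (2 * d) x2) (shift M (2 * d) x1)" using ba x1 x2 by simp
  qed
  have G3: "\<forall>y\<in>pts M' - a ` pts M.
         \<bar>snd (lowest_anc_in M' (a ` pts M) y) - snd y\<bar> \<le> ereal (2 * d)"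
  proof
    fix y assume "y \<in> pts M' - a ` pts M"
    then show "\<bar>snd (lowest_anc_in M' (a ` pts M) y) - snd y\<bar> \<le> ereal (2 * d)"
      using g3[OF MT NT ap ac ah bp ab d0] by blast
  qed
  have "good_map M M' d a" unfolding good_map_def using aPi ac aI G2 G3 by blast
  with ma show ?thesis by blast
qed

end
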